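(* Let $(A,\Delta)$ be a graded connected coalgebra, $1_A$ the unique element of $A_0$ with $\varepsilon(1_A)=1$, and $\lambda:A\to\mathbb{K}$ a linear form with $\lambda(1_A)=1$. (1) There exists a unique coalgebra morphism $\psi:(A,\Delta)\to(\mathbb{K}[X],\Delta)$ such that $\varepsilon'\circ\psi=\lambda$. (2) If $(A,m,\Delta)$ is a bialgebra, then $\psi$ is a bialgebra morphism $(A,m,\Delta)\to(\mathbb{K}[X],m,\Delta)$ if and only if $\lambda$ is a character of $A$. (3) If $(A,m,\Delta,\delta)$ is a bialgebra in cointeraction, then $\psi$ is a morphism of bialgebras in cointeraction $(A,m,\Delta,\delta)\to(\mathbb{K}[X],m,\Delta,\delta)$ if and only if $\lambda$ is the counit $\varepsilon'$ of $(A,m,\delta)$.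
   Context: Work over a field $\mathbb{K}$ of characteristic zero. A graded connected coalgebra is a coalgebra $A=\bigoplus_{n\ge0}A_n$ with $\Delta(A_n)\subseteq\bigoplus_{i+j=n}A_i\otimes A_j$ and $A_0$ one-dimensional. On $\mathbb{K}[X]$: usual product $m$; coproducts $\Delta(X)=X\otimes1+1\otimes X$ and $\delta(X)=X\otimes X$, extended multiplicatively (so $\Delta(P)(X,Y)=P(X+Y)$, $\delta(P)(X,Y)=P(XY)$); counit of $\Delta$ is $P\mapsto P(0)$, counit of $\delta$ is $\varepsilon'(P)=P(1)$. A character of an algebra is an algebra morphism to $\mathbb{K}$. A bialgebra in cointeraction is $(A,m,\Delta,\delta)$ where $(A,m,\Delta)$ and $(A,m,\delta)$ are bialgebras and $(\Delta\otimes Id)\circ\delta=m_{1,3,24}\circ(\delta\otimes\delta)\circ\Delta$, with $m_{1,3,24}(a\otimes b\otimes c\otimes d)=a\otimes c\otimes bd$; a morphism of such is a linear map that is a bialgebra morphism for both structures. In (3), $A$ is as in the hypothesis (graded connected for $\Delta$). *)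

theory Defs
  imports Main "HOL-Computational_Algebra.Polynomial"
begin

text \<open>Since Isabelle/HOL
  has no tensor products, an element of V (x) W is represented by a finite list
  of pairs [(x1,y1),...,(xn,yn)] standing for the sum of the xi (x) yi.
  Two such lists represent the same tensor iff all functionals f (x) g
  (f, g linear forms) take the same value on them; over a field this is exactly
  equality in V (x) W.\<close>

definition tensor_eq ::
  "('k::field \<Rightarrow> 'a::ab_group_add \<Rightarrow> 'a) \<Rightarrow> ('k \<Rightarrow> 'b::ab_group_add \<Rightarrow> 'b)
   \<Rightarrow> ('a \<times> 'b) list \<Rightarrow> ('a \<times> 'b) list \<Rightarrow> bool" where
  "tensor_eq s1 s2 L M \<longleftrightarrow>
     (\<forall>f g. Vector_Spaces.linear s1 (*) f \<longrightarrow> Vector_Spaces.linear s2 (*) g \<longrightarrow>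
        (\<Sum>(x,y)\<leftarrow>L. f x * g y) = (\<Sum>(x,y)\<leftarrow>M. f x * g y))"

definition tensor3_eq ::
  "('k::field \<Rightarrow> 'a::ab_group_add \<Rightarrow> 'a)
   \<Rightarrow> ('a \<times> 'a \<times> 'a) list \<Rightarrow> ('a \<times> 'a \<times> 'a) list \<Rightarrow> bool" where
  "tensor3_eq s L M \<longleftrightarrow>
     (\<forall>f g h. Vector_Spaces.linear s (*) f \<longrightarrow> Vector_Spaces.linear s (*) g \<longrightarrow>
        Vector_Spaces.linear s (*) h \<longrightarrow>
        (\<Sum>(x,y,z)\<leftarrow>L. f x * g y * h z) = (\<Sum>(x,y,z)\<leftarrow>M. f x * g y * h z))"

definition coalgebra ::
  "('k::field \<Rightarrow> 'a::ab_group_add \<Rightarrow> 'a) \<Rightarrow> ('a \<Rightarrow> ('a \<times> 'a) list) \<Rightarrow> ('a \<Rightarrow> 'k) \<Rightarrow> bool" where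
  "coalgebra s D e \<longleftrightarrow>
     vector_space s \<and>
     Vector_Spaces.linear s (*) e \<and>
     (\<forall>a b. tensor_eq s s (D (a + b)) (D a @ D b)) \<and>
     (\<forall>c a. tensor_eq s s (D (s c a)) (map (\<lambda>(x,y). (s c x, y)) (D a))) \<and>
     (\<forall>a. tensor3_eq s
            (concat (map (\<lambda>(x,y). map (\<lambda>(u,v). (u,v,y)) (D x)) (D a)))
            (concat (map (\<lambda>(x,y). map (\<lambda>(u,v). (x,u,v)) (D y)) (D a)))) \<and>
     (\<forall>a. (\<Sum>(x,y)\<leftarrow>D a. s (e x) y) = a) \<and>
     (\<forall>a. (\<Sum>(x,y)\<leftarrow>D a. s (e y) x) = a)"

definition graded_connected_coalgebra ::
  "('k::field \<Rightarrow> 'a::ab_group_add \<Rightarrow> 'a) \<Rightarrow> ('a \<Rightarrow> ('a \<times> 'a) list) \<Rightarrow> ('a \<Rightarrow> 'k)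
   \<Rightarrow> (nat \<Rightarrow> 'a set) \<Rightarrow> bool" where
  "graded_connected_coalgebra s D e G \<longleftrightarrow>
     coalgebra s D e \<and>
     (\<forall>n. module.subspace s (G n)) \<and>
     (\<forall>a. \<exists>!c :: nat \<Rightarrow> 'a. (\<forall>n. c n \<in> G n) \<and> finite {n. c n \<noteq> 0} \<and>
              a = (\<Sum>n\<in>{n. c n \<noteq> 0}. c n)) \<and>
     (\<forall>n. \<forall>a\<in>G n. \<exists>L. tensor_eq s s (D a) L \<and>
              (\<forall>(x,y)\<in>set L. \<exists>i j. i + j = n \<and> x \<in> G i \<and> y \<in> G j)) \<and>
     (\<exists>z. z \<noteq> 0 \<and> G 0 = module.span s {z})"

definition bialgebra ::
  "('k::field \<Rightarrow> 'a::ab_group_add \<Rightarrow> 'a) \<Rightarrow> ('a \<Rightarrow> 'a \<Rightarrow> 'a) \<Rightarrow> 'a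
   \<Rightarrow> ('a \<Rightarrow> ('a \<times> 'a) list) \<Rightarrow> ('a \<Rightarrow> 'k) \<Rightarrow> bool" where
  "bialgebra s m one D e \<longleftrightarrow>
     coalgebra s D e \<and>
     (\<forall>a b c. m (a + b) c = m a c + m b c) \<and>
     (\<forall>a b c. m a (b + c) = m a b + m a c) \<and>
     (\<forall>k a b. m (s k a) b = s k (m a b)) \<and>
     (\<forall>k a b. m a (s k b) = s k (m a b)) \<and>
     (\<forall>a b c. m (m a b) c = m a (m b c)) \<and>
     (\<forall>a. m one a = a \<and> m a one = a) \<and>
     (\<forall>a b. tensor_eq s s (D (m a b))
              (concat (map (\<lambda>(x,y). map (\<lambda>(x',y'). (m x x', m y y')) (D b)) (D a)))) \<and>
     tensor_eq s s (D one) [(one, one)] \<and>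
     (\<forall>a b. e (m a b) = e a * e b) \<and>
     e one = 1"

definition cointeraction ::
  "('k::field \<Rightarrow> 'a::ab_group_add \<Rightarrow> 'a) \<Rightarrow> ('a \<Rightarrow> 'a \<Rightarrow> 'a) \<Rightarrow> 'a
   \<Rightarrow> ('a \<Rightarrow> ('a \<times> 'a) list) \<Rightarrow> ('a \<Rightarrow> 'k)
   \<Rightarrow> ('a \<Rightarrow> ('a \<times> 'a) list) \<Rightarrow> ('a \<Rightarrow> 'k) \<Rightarrow> bool" where
  "cointeraction s m one D e d e' \<longleftrightarrow>
     bialgebra s m one D e \<and> bialgebra s m one d e' \<and>
     (\<forall>a. tensor3_eq s
        (concat (map (\<lambda>(x,y). map (\<lambda>(u,v). (u,v,y)) (D x)) (d a)))
        (concat (map (\<lambda>(x,y). concat (map (\<lambda>(x1,x2). map (\<lambda>(y1,y2). (x1, y1, m x2 y2)) (d y)) (d x)))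
                   (D a))))"

definition coalgebra_morphism ::
  "('k::field \<Rightarrow> 'a::ab_group_add \<Rightarrow> 'a) \<Rightarrow> ('a \<Rightarrow> ('a \<times> 'a) list) \<Rightarrow> ('a \<Rightarrow> 'k)
   \<Rightarrow> ('k \<Rightarrow> 'b::ab_group_add \<Rightarrow> 'b) \<Rightarrow> ('b \<Rightarrow> ('b \<times> 'b) list) \<Rightarrow> ('b \<Rightarrow> 'k)
   \<Rightarrow> ('a \<Rightarrow> 'b) \<Rightarrow> bool" where
  "coalgebra_morphism s D e s' D' e' f \<longleftrightarrow>
     Vector_Spaces.linear s s' f \<and>
     (\<forall>a. tensor_eq s' s' (map (\<lambda>(x,y). (f x, f y)) (D a)) (D' (f a))) \<and>
     (\<forall>a. e' (f a) = e a)"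

definition algebra_morphism ::
  "('a \<Rightarrow> 'a \<Rightarrow> 'a) \<Rightarrow> 'a \<Rightarrow> ('b \<Rightarrow> 'b \<Rightarrow> 'b) \<Rightarrow> 'b \<Rightarrow> ('a \<Rightarrow> 'b) \<Rightarrow> bool" where
  "algebra_morphism m one m' one' f \<longleftrightarrow>
     (\<forall>a b. f (m a b) = m' (f a) (f b)) \<and> f one = one'"

definition bialgebra_morphism ::
  "('k::field \<Rightarrow> 'a::ab_group_add \<Rightarrow> 'a) \<Rightarrow> ('a \<Rightarrow> 'a \<Rightarrow> 'a) \<Rightarrow> 'a
   \<Rightarrow> ('a \<Rightarrow> ('a \<times> 'a) list) \<Rightarrow> ('a \<Rightarrow> 'k)
   \<Rightarrow> ('k \<Rightarrow> 'b::ab_group_add \<Rightarrow> 'b) \<Rightarrow> ('b \<Rightarrow> 'b \<Rightarrow> 'b) \<Rightarrow> 'b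
   \<Rightarrow> ('b \<Rightarrow> ('b \<times> 'b) list) \<Rightarrow> ('b \<Rightarrow> 'k) \<Rightarrow> ('a \<Rightarrow> 'b) \<Rightarrow> bool" where
  "bialgebra_morphism s m one D e s' m' one' D' e' f \<longleftrightarrow>
     coalgebra_morphism s D e s' D' e' f \<and> algebra_morphism m one m' one' f"

definition character ::
  "('k::field \<Rightarrow> 'a::ab_group_add \<Rightarrow> 'a) \<Rightarrow> ('a \<Rightarrow> 'a \<Rightarrow> 'a) \<Rightarrow> 'a \<Rightarrow> ('a \<Rightarrow> 'k) \<Rightarrow> bool" where
  "character s m one l \<longleftrightarrow>
     Vector_Spaces.linear s (*) l \<and> algebra_morphism m one (*) 1 l"

text \<open>Structures on K[X].  polyDelta P represents P(X+Y) = sum_n p_n sum_k (n choose k) X^k Y^(n-k),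
  polydelta P represents P(XY) = sum_n p_n X^n Y^n.\<close>
definition polyDelta :: "'k::field poly \<Rightarrow> ('k poly \<times> 'k poly) list" where
  "polyDelta P = concat (map (\<lambda>n. map (\<lambda>k. (monom (coeff P n * of_nat (n choose k)) k, monom 1 (n - k)))
                                       [0..<Suc n]) [0..<Suc (degree P)])"

definition polydelta :: "'k::field poly \<Rightarrow> ('k poly \<times> 'k poly) list" where
  "polydelta P = map (\<lambda>n. (monom (coeff P n) n, monom 1 n)) [0..<Suc (degree P)]"

definition polyeps :: "'k::field poly \<Rightarrow> 'k" where
  "polyeps P = poly P 0"

definition polyeps' :: "'k::field poly \<Rightarrow> 'k" where
  "polyeps' P = poly P 1"

end

theory Submission
  imports Defs "HOL-Computational_Algebra.Formal_Power_Series"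
begin

lemma vs_field: "vector_space ((*) :: 'k::field \<Rightarrow> 'k \<Rightarrow> 'k)"
  by (unfold_locales) (auto simp: algebra_simps)

lemma vs_poly: "vector_space (smult :: 'k::field \<Rightarrow> 'k poly \<Rightarrow> 'k poly)"
  by (unfold_locales) (auto simp: smult_add_right smult_add_left)

lemma lin_add: "Vector_Spaces.linear s1 s2 f \<Longrightarrow> f (x + y) = f x + f y"
  by (simp add: Vector_Spaces.linear_iff)
lemma lin_scale: "Vector_Spaces.linear s1 s2 f \<Longrightarrow> f (s1 c x) = s2 c (f x)"
  by (simp add: Vector_Spaces.linear_iff)
lemma lin_0: "Vector_Spaces.linear s1 s2 f \<Longrightarrow> f 0 = 0"
  using lin_add[of s1 s2 f 0 0] by simp
lemma lin_sum_list: "Vector_Spaces.linear s1 s2 f \<Longrightarrow> f (sum_list (map h L)) = sum_list (map (\<lambda>x. f (h x)) L)"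
  by (induct L) (auto simp: lin_0 lin_add)
lemma lin_sum: "Vector_Spaces.linear s1 s2 f \<Longrightarrow> f (sum h A) = sum (\<lambda>x. f (h x)) A"
  by (induct A rule: infinite_finite_induct) (auto simp: lin_0 lin_add)
lemma lin_diff: "Vector_Spaces.linear s1 s2 f \<Longrightarrow> f (x - y) = f x - f y"
  using lin_add[of s1 s2 f "x - y" y] by (simp add: algebra_simps)

lemma lin_eval: "Vector_Spaces.linear smult (*) (\<lambda>p. poly p (s::'k::field))"
  by (simp add: Vector_Spaces.linear_iff vs_poly vs_field)

lemma sum_list_concat': "sum_list (concat xs) = sum_list (map sum_list xs)"
  by (induct xs) auto


definition conv :: "('a \<Rightarrow> ('a \<times> 'a) list) \<Rightarrow> ('a \<Rightarrow> 'k::field) \<Rightarrow> ('a \<Rightarrow> 'k) \<Rightarrow> 'a \<Rightarrow> 'k" where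
  "conv D f g a = (\<Sum>(x,y)\<leftarrow>D a. f x * g y)"

primrec pw :: "('a \<Rightarrow> ('a \<times> 'a) list) \<Rightarrow> ('a \<Rightarrow> 'k::field) \<Rightarrow> ('a \<Rightarrow> 'k) \<Rightarrow> nat \<Rightarrow> 'a \<Rightarrow> 'k" where
  "pw D e f 0 = e"
| "pw D e f (Suc n) = conv D f (pw D e f n)"

lemma tensor_eqD:
  "tensor_eq s1 s2 L M \<Longrightarrow> Vector_Spaces.linear s1 (*) f \<Longrightarrow> Vector_Spaces.linear s2 (*) g \<Longrightarrow>
   (\<Sum>(x,y)\<leftarrow>L. f x * g y) = (\<Sum>(x,y)\<leftarrow>M. f x * g y)"
  unfolding tensor_eq_def by blast

lemma tensor3_eqD:
  "tensor3_eq s L M \<Longrightarrow> Vector_Spaces.linear s (*) f \<Longrightarrow> Vector_Spaces.linear s (*) g \<Longrightarrow>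
   Vector_Spaces.linear s (*) h \<Longrightarrow>
   (\<Sum>(x,y,z)\<leftarrow>L. f x * g y * h z) = (\<Sum>(x,y,z)\<leftarrow>M. f x * g y * h z)"
  unfolding tensor3_eq_def by blast

lemma sum_list_case_mult_left:
  "(\<Sum>(x,y)\<leftarrow>L. c * F x y) = (c::'k::field) * (\<Sum>(x,y)\<leftarrow>L. F x y)"
  by (induct L) (auto simp: algebra_simps)

lemma sum_list_case_mult_right:
  "(\<Sum>(x,y)\<leftarrow>L. F x y * c) = (\<Sum>(x,y)\<leftarrow>L. F x y) * (c::'k::field)"
  by (induct L) (auto simp: algebra_simps)

context
  fixes sc :: "'k::field \<Rightarrow> 'a::ab_group_add \<Rightarrow> 'a" and D e
  assumes co: "coalgebra sc D e"
begin

lemma co_vs: "vector_space sc" using co by (simp add: coalgebra_def)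
lemma co_e: "Vector_Spaces.linear sc (*) e" using co by (simp add: coalgebra_def)

lemma conv_linear:
  assumes f: "Vector_Spaces.linear sc (*) f" and g: "Vector_Spaces.linear sc (*) g"
  shows "Vector_Spaces.linear sc (*) (conv D f g)"
proof -
  have add: "conv D f g (a + b) = conv D f g a + conv D f g b" for a b
    using tensor_eqD[OF _ f g, of "D (a+b)" "D a @ D b"] co unfolding coalgebra_def conv_def by simp
  have sc: "conv D f g (sc c a) = c * conv D f g a" for c a
  proof -
    have "conv D f g (sc c a) = (\<Sum>(x,y)\<leftarrow>map (\<lambda>(x,y). (sc c x, y)) (D a). f x * g y)"
      using tensor_eqD[OF _ f g, of "D (sc c a)" "map (\<lambda>(x,y). (sc c x, y)) (D a)"] co
      unfolding coalgebra_def conv_def by simp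
    also have "\<dots> = (\<Sum>(x,y)\<leftarrow>D a. c * (f x * g y))"
      by (simp add: o_def split_def lin_scale[OF f] mult.assoc)
    also have "\<dots> = c * conv D f g a" unfolding conv_def by (rule sum_list_case_mult_left)
    finally show ?thesis .
  qed
  show ?thesis using add sc co_vs vs_field by (simp add: Vector_Spaces.linear_iff)
qed

lemma conv_unit_left:
  assumes f: "Vector_Spaces.linear sc (*) f"
  shows "conv D e f a = f a"
proof -
  have "f a = f (\<Sum>(x,y)\<leftarrow>D a. sc (e x) y)" using co unfolding coalgebra_def by simp
  also have "\<dots> = (\<Sum>(x,y)\<leftarrow>D a. f (sc (e x) y))"
    by (simp add: lin_sum_list[OF f] split_def)
  also have "\<dots> = conv D e f a" unfolding conv_def by (simp add: lin_scale[OF f])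
  finally show ?thesis by simp
qed

lemma conv_unit_right:
  assumes f: "Vector_Spaces.linear sc (*) f"
  shows "conv D f e a = f a"
proof -
  have "f a = f (\<Sum>(x,y)\<leftarrow>D a. sc (e y) x)" using co unfolding coalgebra_def by simp
  also have "\<dots> = (\<Sum>(x,y)\<leftarrow>D a. f (sc (e y) x))"
    by (simp add: lin_sum_list[OF f] split_def)
  also have "\<dots> = conv D f e a" unfolding conv_def by (simp add: lin_scale[OF f] mult.commute)
  finally show ?thesis by simp
qed

lemma conv_assoc:
  assumes f: "Vector_Spaces.linear sc (*) f" and g: "Vector_Spaces.linear sc (*) g"
    and h: "Vector_Spaces.linear sc (*) h"
  shows "conv D (conv D f g) h a = conv D f (conv D g h) a"
proof -
  have T: "tensor3_eq sc
            (concat (map (\<lambda>(x,y). map (\<lambda>(u,v). (u,v,y)) (D x)) (D a)))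
            (concat (map (\<lambda>(x,y). map (\<lambda>(u,v). (x,u,v)) (D y)) (D a)))"
    using co unfolding coalgebra_def by blast
  have "conv D (conv D f g) h a = (\<Sum>(x,y,z)\<leftarrow>concat (map (\<lambda>(x,y). map (\<lambda>(u,v). (u,v,y)) (D x)) (D a)). f x * g y * h z)"
    unfolding conv_def by (simp add: map_concat sum_list_concat' o_def split_def sum_list_mult_const)
  also have "\<dots> = (\<Sum>(x,y,z)\<leftarrow>concat (map (\<lambda>(x,y). map (\<lambda>(u,v). (x,u,v)) (D y)) (D a)). f x * g y * h z)"
    by (rule tensor3_eqD[OF T f g h])
  also have "\<dots> = conv D f (conv D g h) a"
    unfolding conv_def by (simp add: map_concat sum_list_concat' o_def split_def sum_list_const_mult mult.assoc)
  finally show ?thesis .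
qed

lemma pw_linear: "Vector_Spaces.linear sc (*) f \<Longrightarrow> Vector_Spaces.linear sc (*) (pw D e f n)"
  by (induct n) (auto simp: co_e conv_linear)

lemma pw_add:
  assumes f: "Vector_Spaces.linear sc (*) f"
  shows "pw D e f (i + j) = conv D (pw D e f i) (pw D e f j)"
proof (induct i)
  case 0 show ?case by (auto simp: conv_unit_left pw_linear[OF f])
next
  case (Suc i)
  show ?case by (rule ext) (simp add: Suc conv_assoc f pw_linear)
qed

lemma pw_one: "Vector_Spaces.linear sc (*) f \<Longrightarrow> pw D e f (Suc 0) = f"
  by (auto simp: conv_unit_right)

end


definition PP :: "('k::field poly \<times> 'k poly) list \<Rightarrow> 'k poly poly" where
  "PP L = (\<Sum>(x,y)\<leftarrow>L. [:x:] * map_poly (\<lambda>c. [:c:]) y)"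

lemma poly_map_const: "poly (map_poly (\<lambda>c. [:c:]) y) [:t:] = [:poly y t:]"
  by (induct y) (auto simp: map_poly_pCons mult.commute)

lemma eval_PP: "poly (poly (PP L) [:t:]) s = (\<Sum>(x,y)\<leftarrow>L. poly x s * poly y t)"
  unfolding PP_def by (induct L) (auto simp: poly_map_const)

lemma coeff_PP: "coeff (coeff (PP L) j) i = (\<Sum>(x,y)\<leftarrow>L. coeff x i * coeff y j)"
  unfolding PP_def by (induct L) (auto simp: coeff_map_poly mult.commute)

lemma poly_zero_inj: fixes p :: "'a::idom poly" and h :: "nat \<Rightarrow> 'a" shows "inj h \<Longrightarrow> (\<And>n. poly p (h n) = 0) \<Longrightarrow> p = 0"
proof (rule ccontr)
  assume "inj h" "\<And>n. poly p (h n) = 0" "p \<noteq> 0"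
  then have "finite {x. poly p x = 0}" by (simp add: poly_roots_finite)
  moreover have "range h \<subseteq> {x. poly p x = 0}" using \<open>\<And>n. poly p (h n) = 0\<close> by auto
  ultimately have "finite (range h)" by (rule finite_subset[rotated])
  then show False using range_inj_infinite[OF \<open>inj h\<close>] by contradiction
qed

lemma inj_sucnat: "inj (\<lambda>n. of_nat (Suc n) :: 'k::field_char_0)"
  by (rule injI) simp

lemma inj_sucnat_const: "inj (\<lambda>n. [:of_nat (Suc n) :: 'k::field_char_0:])"
  by (rule injI) simp

lemma lin_expand:
  assumes f: "Vector_Spaces.linear smult (*) f" and d: "degree x \<le> N"
  shows "f x = (\<Sum>i\<le>N. coeff x i * f (monom 1 i))"
proof -
  have "f x = f (\<Sum>i\<le>N. monom (coeff x i) i)" using poly_as_sum_of_monoms'[OF d] by simp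
  also have "\<dots> = (\<Sum>i\<le>N. f (smult (coeff x i) (monom 1 i)))" by (simp add: lin_sum[OF f] smult_monom)
  also have "\<dots> = (\<Sum>i\<le>N. coeff x i * f (monom 1 i))" by (simp add: lin_scale[OF f])
  finally show ?thesis .
qed

lemma sum_list_sum_swap: "sum_list (map (\<lambda>p. sum (F p) A) L) = sum (\<lambda>i. sum_list (map (\<lambda>p. F p i) L)) A"
  by (induct L) (auto simp: sum.distrib)

lemma PP_expand:
  assumes f: "Vector_Spaces.linear smult (*) f" and g: "Vector_Spaces.linear smult (*) g"
    and d: "\<forall>(x,y)\<in>set L. degree x \<le> N \<and> degree y \<le> N"
  shows "(\<Sum>(x,y)\<leftarrow>L. f x * g y) = (\<Sum>i\<le>N. \<Sum>j\<le>N. coeff (coeff (PP L) j) i * f (monom 1 i) * g (monom 1 j))"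
proof -
  have "(\<Sum>(x,y)\<leftarrow>L. f x * g y) = (\<Sum>p\<leftarrow>L. \<Sum>i\<le>N. \<Sum>j\<le>N. coeff (fst p) i * coeff (snd p) j * f (monom 1 i) * g (monom 1 j))"
  proof (rule arg_cong[where f=sum_list], rule map_cong[OF refl])
    fix p assume "p \<in> set L"
    with d have "degree (fst p) \<le> N" "degree (snd p) \<le> N" by auto
    then show "(\<lambda>(x,y). f x * g y) p = (\<Sum>i\<le>N. \<Sum>j\<le>N. coeff (fst p) i * coeff (snd p) j * f (monom 1 i) * g (monom 1 j))"
      by (simp add: split_def lin_expand[OF f] lin_expand[OF g] sum_product algebra_simps)
  qed
  also have "\<dots> = (\<Sum>i\<le>N. \<Sum>j\<le>N. (\<Sum>p\<leftarrow>L. coeff (fst p) i * coeff (snd p) j) * f (monom 1 i) * g (monom 1 j))"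
    by (simp add: sum_list_sum_swap sum_list_mult_const)
  also have "\<dots> = (\<Sum>i\<le>N. \<Sum>j\<le>N. coeff (coeff (PP L) j) i * f (monom 1 i) * g (monom 1 j))"
    by (simp add: coeff_PP split_def)
  finally show ?thesis .
qed

lemma poly_tensor_eq:
  fixes L M :: "('k::field_char_0 poly \<times> 'k poly) list"
  assumes H: "\<And>i j. (\<Sum>(x,y)\<leftarrow>L. poly x (of_nat (Suc i)) * poly y (of_nat (Suc j)))
                   = (\<Sum>(x,y)\<leftarrow>M. poly x (of_nat (Suc i)) * poly y (of_nat (Suc j)))"
  shows "tensor_eq smult smult L M"
proof -
  define Q where "Q = PP L - PP M"
  have "poly Q [:of_nat (Suc j):] = 0" for j
    proof (rule poly_zero_inj[OF inj_sucnat])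
    fix i
    show "poly (poly Q [:of_nat (Suc j):]) (of_nat (Suc i)) = 0"
      unfolding Q_def poly_diff eval_PP using H[of i j] by simp
  qed
  then have "Q = 0" by (rule poly_zero_inj[OF inj_sucnat_const])
  then have PPeq: "PP L = PP M" by (simp add: Q_def)
  define N where "N = Max (insert 0 ((\<lambda>(x,y). max (degree x) (degree y)) ` set (L @ M)))"
  have dN: "\<forall>(x,y)\<in>set L. degree x \<le> N \<and> degree y \<le> N" "\<forall>(x,y)\<in>set M. degree x \<le> N \<and> degree y \<le> N"
  proof -
    have fin: "finite (insert 0 ((\<lambda>(x,y). max (degree x) (degree y)) ` set (L @ M)))" by simp
    have "degree x \<le> N \<and> degree y \<le> N" if "(x,y) \<in> set (L @ M)" for x y
    proof -
      have "max (degree x) (degree y) \<le> N" unfolding N_def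
        by (rule Max_ge[OF fin], rule insertI2, rule image_eqI[where x="(x,y)"], simp, rule that)
      then show ?thesis by simp
    qed
    then show "\<forall>(x,y)\<in>set L. degree x \<le> N \<and> degree y \<le> N" "\<forall>(x,y)\<in>set M. degree x \<le> N \<and> degree y \<le> N"
      by auto
  qed
  show ?thesis unfolding tensor_eq_def
  proof (intro allI impI)
    fix f g :: "'k poly \<Rightarrow> 'k"
    assume f: "Vector_Spaces.linear smult (*) f" and g: "Vector_Spaces.linear smult (*) g"
    show "(\<Sum>(x,y)\<leftarrow>L. f x * g y) = (\<Sum>(x,y)\<leftarrow>M. f x * g y)"
      unfolding PP_expand[OF f g dN(1)] PP_expand[OF f g dN(2)] PPeq ..
  qed
qed



lemma sl_upt: "sum_list (map f [0..<n]) = sum f {..<n}"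
  by (induct n) auto

lemma eval_polyDelta:
  "(\<Sum>(x,y)\<leftarrow>polyDelta P. poly x s * poly y t) = poly P (s + t)"
proof -
  have "(\<Sum>(x,y)\<leftarrow>polyDelta P. poly x s * poly y t) =
        (\<Sum>n<Suc (degree P). \<Sum>k<Suc n. coeff P n * (of_nat (n choose k) * s ^ k * t ^ (n - k)))"
    unfolding polyDelta_def by (simp add: map_concat sum_list_concat' o_def sl_upt poly_monom mult.assoc)
  also have "\<dots> = (\<Sum>n<Suc (degree P). coeff P n * (s + t) ^ n)"
    by (simp add: binomial_ring sum_distrib_left lessThan_Suc_atMost)
  also have "\<dots> = poly P (s + t)" by (simp add: poly_altdef lessThan_Suc_atMost)
  finally show ?thesis .
qed

lemma eval_polydelta:
  "(\<Sum>(x,y)\<leftarrow>polydelta P. poly x s * poly y t) = poly P (s * t)"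
proof -
  have "(\<Sum>(x,y)\<leftarrow>polydelta P. poly x s * poly y t) = (\<Sum>n<Suc (degree P). coeff P n * (s * t) ^ n)"
    unfolding polydelta_def by (simp add: o_def sl_upt poly_monom power_mult_distrib mult.assoc)
  also have "\<dots> = poly P (s * t)" by (simp add: poly_altdef lessThan_Suc_atMost)
  finally show ?thesis .
qed

definition bpoly :: "nat \<Rightarrow> 'k::field_char_0 poly" where
  "bpoly n = smult (inverse (fact n)) (\<Prod>i<n. [:- of_nat i, 1:])"

lemma poly_bpoly: "poly (bpoly n) s = s gchoose n"
proof -
  have "s gchoose n = (\<Prod>i = 0..<n. s - of_nat i) / fact n"
    using gbinomial_mult_fact'[of s n] by (simp add: field_simps)
  then show ?thesis unfolding bpoly_def by (simp add: poly_prod atLeast0LessThan field_simps)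
qed


lemma sum_list_zero: "(\<And>v. v \<in> set xs \<Longrightarrow> v = (0::'b::monoid_add)) \<Longrightarrow> sum_list xs = 0"
  by (induct xs) auto


lemma list_bound: "\<exists>N::nat. \<forall>p\<in>set L. F p \<le> N"
  by (induct L) (auto, metis le_trans max.cobounded1 max.cobounded2)

lemma lin_minus_fun:
  "Vector_Spaces.linear s (*) f \<Longrightarrow> Vector_Spaces.linear s (*) g \<Longrightarrow>
   Vector_Spaces.linear s (*) (\<lambda>a. f a - g a)"
  by (simp add: Vector_Spaces.linear_iff algebra_simps)

definition nuf :: "('a \<Rightarrow> 'k::field) \<Rightarrow> ('a \<Rightarrow> 'k) \<Rightarrow> 'a \<Rightarrow> 'k" where
  "nuf lam e = (\<lambda>a. lam a - e a)"

definition nb :: "('a \<Rightarrow> ('a \<times> 'a) list) \<Rightarrow> ('a \<Rightarrow> 'k::field) \<Rightarrow> ('a \<Rightarrow> 'k) \<Rightarrow> 'a \<Rightarrow> nat" where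
  "nb D e lam a = (SOME N. \<forall>n\<ge>N. pw D e (nuf lam e) n a = 0)"

definition psi :: "('a \<Rightarrow> ('a \<times> 'a) list) \<Rightarrow> ('a \<Rightarrow> 'k::field_char_0) \<Rightarrow> ('a \<Rightarrow> 'k) \<Rightarrow> 'a \<Rightarrow> 'k poly" where
  "psi D e lam a = (\<Sum>n<nb D e lam a. smult (pw D e (nuf lam e) n a) (bpoly n))"

context
  fixes sc :: "'k::field_char_0 \<Rightarrow> 'a::ab_group_add \<Rightarrow> 'a"
    and D :: "'a \<Rightarrow> ('a \<times> 'a) list" and e :: "'a \<Rightarrow> 'k"
    and G :: "nat \<Rightarrow> 'a set" and u :: 'a and lam :: "'a \<Rightarrow> 'k"
  assumes gc: "graded_connected_coalgebra sc D e G"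
    and u0: "u \<in> G 0" and eu: "e u = 1"
    and lin: "Vector_Spaces.linear sc (*) lam" and lu: "lam u = 1"
begin

lemma gco: "coalgebra sc D e" using gc by (simp add: graded_connected_coalgebra_def)

lemma nu_lin: "Vector_Spaces.linear sc (*) (nuf lam e)"
  unfolding nuf_def by (rule lin_minus_fun[OF lin co_e[OF gco]])

lemma nu_G0: assumes g: "g \<in> G 0" shows "nuf lam e g = 0"
proof -
  obtain z where z: "z \<noteq> 0" "G 0 = module.span sc {z}"
    using gc unfolding graded_connected_coalgebra_def by blast
  have md: "module sc" using co_vs[OF gco] by (simp add: module_iff_vector_space)
  have sp: "G 0 = range (\<lambda>k. sc k z)" using z(2) module.span_singleton[OF md] by simp
  obtain k0 where k0: "u = sc k0 z" using u0 sp by auto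
  obtain k where k: "g = sc k z" using g sp by auto
  have "k0 \<noteq> 0"
  proof
    assume "k0 = 0"
    then have "u = 0" using k0 md by (simp add: module.scale_zero_left)
    then show False using eu lin_0[OF co_e[OF gco]] by simp
  qed
  have "nuf lam e u = 0" by (simp add: nuf_def eu lu)
  then have "k0 * nuf lam e z = 0" using k0 lin_scale[OF nu_lin] by metis
  then have "nuf lam e z = 0" using \<open>k0 \<noteq> 0\<close> by simp
  then show ?thesis using k lin_scale[OF nu_lin] by simp
qed

lemma nil_hom: "a \<in> G k \<Longrightarrow> k < n \<Longrightarrow> pw D e (nuf lam e) n a = 0"
proof (induct n arbitrary: k a)
  case 0 then show ?case by simp
next
  case (Suc n)
  obtain L where L: "tensor_eq sc sc (D a) L" "\<forall>(x,y)\<in>set L. \<exists>i j. i + j = k \<and> x \<in> G i \<and> y \<in> G j"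
    using gc Suc.prems(1) unfolding graded_connected_coalgebra_def by blast
  have "pw D e (nuf lam e) (Suc n) a = (\<Sum>(x,y)\<leftarrow>D a. nuf lam e x * pw D e (nuf lam e) n y)"
    by (simp add: conv_def)
  also have "\<dots> = (\<Sum>(x,y)\<leftarrow>L. nuf lam e x * pw D e (nuf lam e) n y)"
    by (rule tensor_eqD[OF L(1) nu_lin pw_linear[OF gco nu_lin]])
  also have "\<dots> = 0"
  proof (rule sum_list_zero)
    fix v assume "v \<in> set (map (\<lambda>(x,y). nuf lam e x * pw D e (nuf lam e) n y) L)"
    then obtain x y where xy: "(x,y) \<in> set L" "v = nuf lam e x * pw D e (nuf lam e) n y" by auto
    then obtain i j where ij: "i + j = k" "x \<in> G i" "y \<in> G j" using L(2) by blast
    show "v = 0"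
    proof (cases "i = 0")
      case True then show ?thesis using xy ij nu_G0 by simp
    next
      case False then have "j < n" using ij Suc.prems by simp
      then show ?thesis using xy ij Suc.hyps by simp
    qed
  qed
  finally show ?case .
qed

lemma nil: "\<exists>N. \<forall>n\<ge>N. pw D e (nuf lam e) n a = 0"
proof -
  obtain c :: "nat \<Rightarrow> 'a" where c: "\<forall>n. c n \<in> G n" "finite {n. c n \<noteq> 0}" "a = (\<Sum>n\<in>{n. c n \<noteq> 0}. c n)"
    using gc unfolding graded_connected_coalgebra_def by metis
  define S where "S = {n. c n \<noteq> 0}"
  have "\<forall>n\<ge>Suc (Max (insert 0 S)). pw D e (nuf lam e) n a = 0"
  proof safe
    fix n assume n: "Suc (Max (insert 0 S)) \<le> n"
    have "pw D e (nuf lam e) n a = (\<Sum>k\<in>S. pw D e (nuf lam e) n (c k))"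
      using c(3) lin_sum[OF pw_linear[OF gco nu_lin]] S_def by simp
    also have "\<dots> = 0"
    proof (rule sum.neutral, safe)
      fix k assume "k \<in> S"
      then have "k \<le> Max (insert 0 S)" using c(2) S_def by simp
      then show "pw D e (nuf lam e) n (c k) = 0" using nil_hom[OF c(1)[rule_format, of k]] n by simp
    qed
    finally show "pw D e (nuf lam e) n a = 0" .
  qed
  then show ?thesis by blast
qed

lemma nbI: "nb D e lam a \<le> n \<Longrightarrow> pw D e (nuf lam e) n a = 0"
  using someI_ex[OF nil[of a]] unfolding nb_def by blast

lemma poly_psi:
  assumes "nb D e lam a \<le> N"
  shows "poly (psi D e lam a) s = (\<Sum>n<N. pw D e (nuf lam e) n a * (s gchoose n))"
proof -
  have "poly (psi D e lam a) s = (\<Sum>n<nb D e lam a. pw D e (nuf lam e) n a * (s gchoose n))"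
    unfolding psi_def by (simp add: poly_sum poly_bpoly)
  also have "\<dots> = (\<Sum>n<N. pw D e (nuf lam e) n a * (s gchoose n))"
    by (rule sum.mono_neutral_left) (use assms nbI in auto)
  finally show ?thesis .
qed

lemma psi_linear: "Vector_Spaces.linear sc smult (psi D e lam)"
proof -
  note pl = pw_linear[OF gco nu_lin]
  have add: "psi D e lam (a + b) = psi D e lam a + psi D e lam b" for a b
  proof -
    define N where "N = nb D e lam (a+b) + nb D e lam a + nb D e lam b"
    have "poly (psi D e lam (a + b)) s = poly (psi D e lam a + psi D e lam b) s" for s
      by (simp add: poly_psi[of _ N] N_def lin_add[OF pl] sum.distrib algebra_simps)
    then show ?thesis by (simp add: poly_eq_poly_eq_iff[symmetric] fun_eq_iff)
  qed
  have scl: "psi D e lam (sc c a) = smult c (psi D e lam a)" for c a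
  proof -
    define N where "N = nb D e lam (sc c a) + nb D e lam a"
    have "poly (psi D e lam (sc c a)) s = poly (smult c (psi D e lam a)) s" for s
      by (simp add: poly_psi[of _ N] N_def lin_scale[OF pl] sum_distrib_left algebra_simps)
    then show ?thesis by (simp add: poly_eq_poly_eq_iff[symmetric] fun_eq_iff)
  qed
  show ?thesis using add scl co_vs[OF gco] vs_poly by (simp add: Vector_Spaces.linear_iff)
qed

lemma psi_counit: "polyeps (psi D e lam a) = e a"
proof -
  have "polyeps (psi D e lam a) = (\<Sum>n<Suc (nb D e lam a). pw D e (nuf lam e) n a * (0 gchoose n))"
    unfolding polyeps_def by (rule poly_psi) simp
  also have "\<dots> = (\<Sum>n\<in>{0}. pw D e (nuf lam e) n a * (0 gchoose n))"
    by (rule sum.mono_neutral_right) (auto simp: gbinomial_0_left)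
  finally show ?thesis by simp
qed

lemma one_gchoose: "((1::'k) gchoose n) = (if n \<le> 1 then 1 else 0)"
  using binomial_gbinomial[of 1 n, where 'a='k] by (cases n) (auto simp: binomial_eq_0)

lemma psi_eps': "polyeps' (psi D e lam a) = lam a"
proof -
  have "polyeps' (psi D e lam a) = (\<Sum>n<Suc (Suc (nb D e lam a)). pw D e (nuf lam e) n a * (1 gchoose n))"
    unfolding polyeps'_def by (rule poly_psi) simp
  also have "\<dots> = (\<Sum>n\<in>{0, 1}. pw D e (nuf lam e) n a * (1 gchoose n))"
    by (rule sum.mono_neutral_right) (auto simp: one_gchoose)
  also have "\<dots> = e a + nuf lam e a"
    by (simp add: one_gchoose conv_unit_right[OF gco nu_lin])
  finally show ?thesis by (simp add: nuf_def)
qed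

lemma psi_comult_eval:
  "(\<Sum>(x,y)\<leftarrow>D a. poly (psi D e lam x) s * poly (psi D e lam y) t) = poly (psi D e lam a) (s + t)"
proof -
  note pl = pw_linear[OF gco nu_lin]
  let ?p = "pw D e (nuf lam e)"
  obtain N0 where N0: "\<forall>p\<in>set (D a). nb D e lam (fst p) + nb D e lam (snd p) \<le> N0"
    using list_bound[of "D a" "\<lambda>p. nb D e lam (fst p) + nb D e lam (snd p)"] by blast
  define N where "N = N0 + nb D e lam a"
  have "(\<Sum>(x,y)\<leftarrow>D a. poly (psi D e lam x) s * poly (psi D e lam y) t)
      = (\<Sum>p\<leftarrow>D a. \<Sum>i<N. \<Sum>k<N. ?p i (fst p) * ?p k (snd p) * ((s gchoose i) * (t gchoose k)))"
  proof (rule arg_cong[where f=sum_list], rule map_cong[OF refl])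
    fix p assume "p \<in> set (D a)"
    then have "nb D e lam (fst p) \<le> N" "nb D e lam (snd p) \<le> N" using N0 N_def by fastforce+
    then show "(\<lambda>(x,y). poly (psi D e lam x) s * poly (psi D e lam y) t) p
        = (\<Sum>i<N. \<Sum>k<N. ?p i (fst p) * ?p k (snd p) * ((s gchoose i) * (t gchoose k)))"
      by (simp add: split_def poly_psi sum_product algebra_simps)
  qed
  also have "\<dots> = (\<Sum>i<N. \<Sum>k<N. conv D (?p i) (?p k) a * ((s gchoose i) * (t gchoose k)))"
    by (simp add: sum_list_sum_swap sum_list_mult_const conv_def split_def)
  also have "\<dots> = (\<Sum>i<N. \<Sum>k<N. ?p (i + k) a * ((s gchoose i) * (t gchoose k)))"
    by (simp add: pw_add[OF gco nu_lin])
  also have "\<dots> = (\<Sum>(i,k)\<in>{..<N} \<times> {..<N}. ?p (i + k) a * ((s gchoose i) * (t gchoose k)))"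
    by (rule sum.cartesian_product)
  also have "\<dots> = (\<Sum>(i,k)\<in>{(i,k). i + k < N}. ?p (i + k) a * ((s gchoose i) * (t gchoose k)))"
    proof (rule sum.mono_neutral_right)
    have "\<And>n. ?p n a \<noteq> 0 \<Longrightarrow> n < nb D e lam a" using nbI not_less by blast
    then show "\<forall>i\<in>{..<N} \<times> {..<N} - {(i, k). i + k < N}. (\<lambda>(i,k). ?p (i + k) a * ((s gchoose i) * (t gchoose k))) i = 0"
      by (fastforce simp: N_def)
  qed auto
  also have "\<dots> = (\<Sum>n<N. \<Sum>i\<le>n. ?p (i + (n - i)) a * ((s gchoose i) * (t gchoose (n - i))))"
    by (rule sum.triangle_reindex)
  also have "\<dots> = (\<Sum>n<N. \<Sum>i\<le>n. ?p n a * ((s gchoose i) * (t gchoose (n - i))))"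
    by (intro sum.cong refl) simp
  also have "\<dots> = (\<Sum>n<N. ?p n a * ((s + t) gchoose n))"
    by (simp add: gbinomial_Vandermonde[symmetric] sum_distrib_left atMost_atLeast0)
  also have "\<dots> = poly (psi D e lam a) (s + t)"
    by (rule poly_psi[symmetric]) (simp add: N_def)
  finally show ?thesis .
qed

lemma psi_comult:
  "tensor_eq smult smult (map (\<lambda>(x,y). (psi D e lam x, psi D e lam y)) (D a)) (polyDelta (psi D e lam a))"
proof (rule poly_tensor_eq)
  fix i j
  let ?s = "of_nat (Suc i) :: 'k" and ?t = "of_nat (Suc j) :: 'k"
  have "(\<Sum>(x,y)\<leftarrow>map (\<lambda>(x,y). (psi D e lam x, psi D e lam y)) (D a). poly x ?s * poly y ?t)
      = (\<Sum>(x,y)\<leftarrow>D a. poly (psi D e lam x) ?s * poly (psi D e lam y) ?t)"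
    by (simp only: map_map o_def split_def fst_conv snd_conv)
  also have "\<dots> = poly (psi D e lam a) (?s + ?t)" by (rule psi_comult_eval)
  also have "\<dots> = (\<Sum>(x,y)\<leftarrow>polyDelta (psi D e lam a). poly x ?s * poly y ?t)"
    by (rule eval_polyDelta[symmetric])
  finally show "(\<Sum>(x,y)\<leftarrow>map (\<lambda>(x,y). (psi D e lam x, psi D e lam y)) (D a). poly x ?s * poly y ?t)
      = (\<Sum>(x,y)\<leftarrow>polyDelta (psi D e lam a). poly x ?s * poly y ?t)" .
qed

lemma psi_morph: "coalgebra_morphism sc D e smult polyDelta polyeps (psi D e lam)"
  unfolding coalgebra_morphism_def using psi_linear psi_comult psi_counit by blast

end



lemma poly_eq_nat:
  fixes p q :: "'k::field_char_0 poly"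
  assumes "\<And>n. poly p (of_nat n) = poly q (of_nat n)"
  shows "p = q"
proof -
  have "p - q = 0" by (rule poly_zero_inj[OF inj_of_nat]) (simp add: assms)
  then show ?thesis by simp
qed

lemma sum_list_prod2:
  "(\<Sum>q\<leftarrow>A. F q) * (\<Sum>r\<leftarrow>B. G r) = (\<Sum>q\<leftarrow>A. \<Sum>r\<leftarrow>B. F q * (G r :: 'k::field))"
  by (induct A) (simp_all add: distrib_right sum_list_const_mult)

lemma phi_eval:
  fixes sc :: "'k::field_char_0 \<Rightarrow> 'a::ab_group_add \<Rightarrow> 'a"
  assumes co: "coalgebra sc D e"
    and mor: "coalgebra_morphism sc D e smult polyDelta polyeps \<phi>" and ev1: "polyeps' \<circ> \<phi> = lam"
  shows "poly (\<phi> a) (of_nat k) = pw D e lam k a"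
proof (induct k arbitrary: a)
  case 0
  then show ?case using mor unfolding coalgebra_morphism_def polyeps_def by simp
next
  case (Suc k)
  have T: "tensor_eq smult smult (map (\<lambda>(x,y). (\<phi> x, \<phi> y)) (D a)) (polyDelta (\<phi> a))"
    using mor unfolding coalgebra_morphism_def by blast
  have "poly (\<phi> a) (of_nat (Suc k)) = poly (\<phi> a) (1 + of_nat k)" by simp
  also have "\<dots> = (\<Sum>(x,y)\<leftarrow>polyDelta (\<phi> a). poly x 1 * poly y (of_nat k))"
    by (rule eval_polyDelta[symmetric])
  also have "\<dots> = (\<Sum>(x,y)\<leftarrow>map (\<lambda>(x,y). (\<phi> x, \<phi> y)) (D a). poly x 1 * poly y (of_nat k))"
    by (rule tensor_eqD[OF T lin_eval lin_eval, symmetric])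
  also have "\<dots> = (\<Sum>(x,y)\<leftarrow>D a. poly (\<phi> x) 1 * poly (\<phi> y) (of_nat k))"
    by (simp only: map_map o_def split_def fst_conv snd_conv)
  also have "\<dots> = conv D lam (pw D e lam k) a"
    unfolding conv_def Suc using ev1 by (simp add: polyeps'_def o_def fun_eq_iff)
  finally show ?case by simp
qed

lemma phi_unique:
  fixes sc :: "'k::field_char_0 \<Rightarrow> 'a::ab_group_add \<Rightarrow> 'a"
  assumes co: "coalgebra sc D e"
    and mor1: "coalgebra_morphism sc D e smult polyDelta polyeps \<phi>1" and ev1: "polyeps' \<circ> \<phi>1 = lam"
    and mor2: "coalgebra_morphism sc D e smult polyDelta polyeps \<phi>2" and ev2: "polyeps' \<circ> \<phi>2 = lam"
  shows "\<phi>1 = \<phi>2"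
proof
  fix a show "\<phi>1 a = \<phi>2 a"
    by (rule poly_eq_nat) (simp add: phi_eval[OF co mor1 ev1] phi_eval[OF co mor2 ev2])
qed

lemma pw_mult:
  assumes bi: "bialgebra sc m one D e" and ch: "character sc m one lam"
  shows "pw D e lam k (m a b) = pw D e lam k a * pw D e lam k b \<and> pw D e lam k one = 1"
proof (induct k arbitrary: a b)
  case 0 then show ?case using bi unfolding bialgebra_def by simp
next
  case (Suc k)
  have co: "coalgebra sc D e" using bi by (simp add: bialgebra_def)
  have ll: "Vector_Spaces.linear sc (*) lam" and lm: "\<And>a b. lam (m a b) = lam a * lam b" and l1: "lam one = 1"
    using ch unfolding character_def algebra_morphism_def by auto
  note pl = pw_linear[OF co ll, of k]
  have T: "tensor_eq sc sc (D (m a b))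
              (concat (map (\<lambda>(x,y). map (\<lambda>(x',y'). (m x x', m y y')) (D b)) (D a)))"
    using bi unfolding bialgebra_def by blast
  have T1: "tensor_eq sc sc (D one) [(one, one)]" using bi unfolding bialgebra_def by blast
  have "pw D e lam (Suc k) (m a b) = (\<Sum>(x,y)\<leftarrow>D (m a b). lam x * pw D e lam k y)"
    by (simp add: conv_def)
  also have "\<dots> = (\<Sum>(x,y)\<leftarrow>concat (map (\<lambda>(x,y). map (\<lambda>(x',y'). (m x x', m y y')) (D b)) (D a)). lam x * pw D e lam k y)"
    by (rule tensor_eqD[OF T ll pl])
  also have "\<dots> = (\<Sum>p\<leftarrow>D a. \<Sum>q\<leftarrow>D b. (lam (fst p) * pw D e lam k (snd p)) * (lam (fst q) * pw D e lam k (snd q)))"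
    by (simp add: map_concat sum_list_concat' o_def split_def lm Suc[THEN conjunct1] algebra_simps)
  also have "\<dots> = pw D e lam (Suc k) a * pw D e lam (Suc k) b"
    by (simp add: conv_def sum_list_prod2 split_def)
  finally have 1: "pw D e lam (Suc k) (m a b) = pw D e lam (Suc k) a * pw D e lam (Suc k) b" .
  have "pw D e lam (Suc k) one = (\<Sum>(x,y)\<leftarrow>D one. lam x * pw D e lam k y)"
    by (simp add: conv_def)
  also have "\<dots> = (\<Sum>(x,y)\<leftarrow>[(one,one)]. lam x * pw D e lam k y)"
    by (rule tensor_eqD[OF T1 ll pl])
  also have "\<dots> = 1" using Suc l1 by simp
  finally show ?case using 1 by simp
qed

lemma coint_distrib:
  assumes ci: "cointeraction sc m one D e d e'"
    and f: "Vector_Spaces.linear sc (*) f" and g: "Vector_Spaces.linear sc (*) g"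
    and h: "Vector_Spaces.linear sc (*) h" and hm: "\<And>x y. h (m x y) = h x * h y"
  shows "conv d (conv D f g) h a = conv D (conv d f h) (conv d g h) a"
proof -
  have T: "tensor3_eq sc
        (concat (map (\<lambda>(x,y). map (\<lambda>(u,v). (u,v,y)) (D x)) (d a)))
        (concat (map (\<lambda>(x,y). concat (map (\<lambda>(x1,x2). map (\<lambda>(y1,y2). (x1, y1, m x2 y2)) (d y)) (d x)))
                   (D a)))"
    using ci unfolding cointeraction_def by blast
  have "conv d (conv D f g) h a = (\<Sum>(x,y,z)\<leftarrow>concat (map (\<lambda>(x,y). map (\<lambda>(u,v). (u,v,y)) (D x)) (d a)). f x * g y * h z)"
    unfolding conv_def by (simp add: map_concat sum_list_concat' o_def split_def sum_list_mult_const)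
  also have "\<dots> = (\<Sum>(x,y,z)\<leftarrow>concat (map (\<lambda>(x,y). concat (map (\<lambda>(x1,x2). map (\<lambda>(y1,y2). (x1, y1, m x2 y2)) (d y)) (d x)))
                   (D a)). f x * g y * h z)"
    by (rule tensor3_eqD[OF T f g h])
  also have "\<dots> = (\<Sum>p\<leftarrow>D a. \<Sum>q\<leftarrow>d (fst p). \<Sum>r\<leftarrow>d (snd p). (f (fst q) * h (snd q)) * (g (fst r) * h (snd r)))"
    by (simp add: map_concat sum_list_concat' o_def split_def hm algebra_simps)
  also have "\<dots> = conv D (conv d f h) (conv d g h) a"
    by (simp add: conv_def sum_list_prod2 split_def)
  finally show ?thesis .
qed


lemma part2:
  fixes sc :: "'k::field_char_0 \<Rightarrow> 'a::ab_group_add \<Rightarrow> 'a"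
  assumes mor: "coalgebra_morphism sc D e smult polyDelta polyeps \<psi>" and ev1: "polyeps' \<circ> \<psi> = lam"
    and lin: "Vector_Spaces.linear sc (*) lam"
    and bi: "bialgebra sc m one D e"
  shows "bialgebra_morphism sc m one D e smult (*) 1 polyDelta polyeps \<psi> \<longleftrightarrow> character sc m one lam"
proof
  assume bm: "bialgebra_morphism sc m one D e smult (*) 1 polyDelta polyeps \<psi>"
  then have am: "\<And>a b. \<psi> (m a b) = \<psi> a * \<psi> b" "\<psi> one = 1"
    unfolding bialgebra_morphism_def algebra_morphism_def by auto
  have la: "lam a = poly (\<psi> a) 1" for a using ev1 by (auto simp: polyeps'_def fun_eq_iff)
  show "character sc m one lam" unfolding character_def algebra_morphism_def
    using lin by (simp add: la am)
next
  assume ch: "character sc m one lam"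
  have co: "coalgebra sc D e" using bi by (simp add: bialgebra_def)
  have "\<psi> (m a b) = \<psi> a * \<psi> b" for a b
    by (rule poly_eq_nat) (simp add: phi_eval[OF co mor ev1] pw_mult[OF bi ch])
  moreover have "\<psi> one = 1"
    by (rule poly_eq_nat) (simp add: phi_eval[OF co mor ev1] pw_mult[OF bi ch])
  ultimately show "bialgebra_morphism sc m one D e smult (*) 1 polyDelta polyeps \<psi>"
    unfolding bialgebra_morphism_def algebra_morphism_def using mor by simp
qed

lemma delta_compat:
  fixes sc :: "'k::field_char_0 \<Rightarrow> 'a::ab_group_add \<Rightarrow> 'a"
  assumes ci: "cointeraction sc m one D e d e'"
    and mor: "coalgebra_morphism sc D e smult polyDelta polyeps \<psi>" and ev1: "polyeps' \<circ> \<psi> = e'"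
  shows "tensor_eq smult smult (map (\<lambda>(x,y). (\<psi> x, \<psi> y)) (d a)) (polydelta (\<psi> a))"
proof -
  have bD: "bialgebra sc m one D e" and bd: "bialgebra sc m one d e'"
    using ci unfolding cointeraction_def by auto
  have coD: "coalgebra sc D e" using bD by (simp add: bialgebra_def)
  have cod: "coalgebra sc d e'" using bd by (simp add: bialgebra_def)
  have ll: "Vector_Spaces.linear sc (*) e'" by (rule co_e[OF cod])
  have ch: "character sc m one e'" using bd ll
    unfolding character_def algebra_morphism_def bialgebra_def by simp
  have key: "conv d (pw D e e' (Suc k)) (pw D e e' (Suc l)) = pw D e e' (Suc k * Suc l)" for k l
  proof (induct k)
    case 0
    show ?case by (rule ext) (simp add: pw_one[OF coD ll] conv_unit_left[OF cod pw_linear[OF coD ll]] del: pw.simps)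
  next
    case (Suc k)
    let ?h = "pw D e e' (Suc l)"
    have hl: "Vector_Spaces.linear sc (*) ?h" by (rule pw_linear[OF coD ll])
    have hm: "\<And>x y. ?h (m x y) = ?h x * ?h y" using pw_mult[OF bD ch] by blast
    have u: "conv d e' ?h = ?h" by (rule ext) (rule conv_unit_left[OF cod hl])
    show ?case
    proof
      fix a
      have "conv d (pw D e e' (Suc (Suc k))) ?h a = conv d (conv D e' (pw D e e' (Suc k))) ?h a" by simp
      also have "\<dots> = conv D (conv d e' ?h) (conv d (pw D e e' (Suc k)) ?h) a"
        by (rule coint_distrib[OF ci ll pw_linear[OF coD ll] hl hm])
      also have "\<dots> = conv D ?h (pw D e e' (Suc k * Suc l)) a" by (simp only: u Suc)
      also have "\<dots> = pw D e e' (Suc l + Suc k * Suc l) a" by (simp only: pw_add[OF coD ll])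
      also have "Suc l + Suc k * Suc l = Suc (Suc k) * Suc l" by simp
      finally show "conv d (pw D e e' (Suc (Suc k))) ?h a = pw D e e' (Suc (Suc k) * Suc l) a" .
    qed
  qed
  show ?thesis
  proof (rule poly_tensor_eq)
    fix i j
    let ?s = "of_nat (Suc i) :: 'k" and ?t = "of_nat (Suc j) :: 'k"
    have "(\<Sum>(x,y)\<leftarrow>map (\<lambda>(x,y). (\<psi> x, \<psi> y)) (d a). poly x ?s * poly y ?t)
        = (\<Sum>(x,y)\<leftarrow>d a. poly (\<psi> x) ?s * poly (\<psi> y) ?t)"
      by (simp only: map_map o_def split_def fst_conv snd_conv)
    also have "\<dots> = conv d (pw D e e' (Suc i)) (pw D e e' (Suc j)) a"
      unfolding conv_def by (simp only: phi_eval[OF coD mor ev1])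
    also have "\<dots> = pw D e e' (Suc i * Suc j) a" by (simp only: key)
    also have "\<dots> = poly (\<psi> a) (of_nat (Suc i * Suc j))" by (simp only: phi_eval[OF coD mor ev1])
    also have "\<dots> = poly (\<psi> a) (?s * ?t)" by (simp only: of_nat_mult)
    also have "\<dots> = (\<Sum>(x,y)\<leftarrow>polydelta (\<psi> a). poly x ?s * poly y ?t)"
      by (rule eval_polydelta[symmetric])
    finally show "(\<Sum>(x,y)\<leftarrow>map (\<lambda>(x,y). (\<psi> x, \<psi> y)) (d a). poly x ?s * poly y ?t)
        = (\<Sum>(x,y)\<leftarrow>polydelta (\<psi> a). poly x ?s * poly y ?t)" .
  qed
qed

theorem proposition64:
  fixes sc :: "'k::field_char_0 \<Rightarrow> 'a::ab_group_add \<Rightarrow> 'a"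
    and D :: "'a \<Rightarrow> ('a \<times> 'a) list" and e :: "'a \<Rightarrow> 'k"
    and G :: "nat \<Rightarrow> 'a set" and u :: 'a and lam :: "'a \<Rightarrow> 'k"
  assumes gc: "graded_connected_coalgebra sc D e G"
    and u0: "u \<in> G 0" and eu: "e u = 1"
    and lin: "Vector_Spaces.linear sc (*) lam" and lu: "lam u = 1"
  shows "(\<exists>!\<psi>. coalgebra_morphism sc D e smult polyDelta polyeps \<psi> \<and> polyeps' \<circ> \<psi> = lam)
    \<and> (\<forall>\<psi> m one. coalgebra_morphism sc D e smult polyDelta polyeps \<psi> \<and> polyeps' \<circ> \<psi> = lam
           \<longrightarrow> bialgebra sc m one D e
           \<longrightarrow> (bialgebra_morphism sc m one D e smult (*) 1 polyDelta polyeps \<psi>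
                \<longleftrightarrow> character sc m one lam))
    \<and> (\<forall>\<psi> m one d e'. coalgebra_morphism sc D e smult polyDelta polyeps \<psi> \<and> polyeps' \<circ> \<psi> = lam
           \<longrightarrow> cointeraction sc m one D e d e'
           \<longrightarrow> ((bialgebra_morphism sc m one D e smult (*) 1 polyDelta polyeps \<psi> \<and>
                 bialgebra_morphism sc m one d e' smult (*) 1 polydelta polyeps' \<psi>)
                \<longleftrightarrow> lam = e'))"
proof (intro conjI allI impI)
  have coD: "coalgebra sc D e" by (rule gco[OF gc u0 eu lin lu])
  show "\<exists>!\<psi>. coalgebra_morphism sc D e smult polyDelta polyeps \<psi> \<and> polyeps' \<circ> \<psi> = lam"
  proof (rule ex1I[where a="psi D e lam"])
    show "coalgebra_morphism sc D e smult polyDelta polyeps (psi D e lam) \<and> polyeps' \<circ> psi D e lam = lam"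
      using psi_morph[OF gc u0 eu lin lu] psi_eps'[OF gc u0 eu lin lu] by (auto simp: fun_eq_iff)
    then show "\<And>\<phi>. coalgebra_morphism sc D e smult polyDelta polyeps \<phi> \<and> polyeps' \<circ> \<phi> = lam \<Longrightarrow> \<phi> = psi D e lam"
      using phi_unique[OF coD] by blast
  qed
next
  fix \<psi> m one
  assume h: "coalgebra_morphism sc D e smult polyDelta polyeps \<psi> \<and> polyeps' \<circ> \<psi> = lam"
    and bi: "bialgebra sc m one D e"
  show "bialgebra_morphism sc m one D e smult (*) 1 polyDelta polyeps \<psi> \<longleftrightarrow> character sc m one lam"
    using part2[OF h[THEN conjunct1] h[THEN conjunct2] lin bi] .
next
  fix \<psi> m one d e'
  assume h: "coalgebra_morphism sc D e smult polyDelta polyeps \<psi> \<and> polyeps' \<circ> \<psi> = lam"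
    and ci: "cointeraction sc m one D e d e'"
  have bD: "bialgebra sc m one D e" and bd: "bialgebra sc m one d e'"
    using ci unfolding cointeraction_def by auto
  show "(bialgebra_morphism sc m one D e smult (*) 1 polyDelta polyeps \<psi> \<and>
         bialgebra_morphism sc m one d e' smult (*) 1 polydelta polyeps' \<psi>) \<longleftrightarrow> lam = e'"
  proof
    assume "bialgebra_morphism sc m one D e smult (*) 1 polyDelta polyeps \<psi> \<and>
         bialgebra_morphism sc m one d e' smult (*) 1 polydelta polyeps' \<psi>"
    then have "\<forall>a. polyeps' (\<psi> a) = e' a"
      unfolding bialgebra_morphism_def coalgebra_morphism_def by blast
    then show "lam = e'" using h by (auto simp: fun_eq_iff)
  next
    assume le: "lam = e'"
    have cod: "coalgebra sc d e'" using bd by (simp add: bialgebra_def)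
    have ch: "character sc m one lam" using bd co_e[OF cod] le
      unfolding character_def algebra_morphism_def bialgebra_def by simp
    have b1: "bialgebra_morphism sc m one D e smult (*) 1 polyDelta polyeps \<psi>"
      using part2[OF h[THEN conjunct1] h[THEN conjunct2] lin bD] ch by simp
    have ev1: "polyeps' \<circ> \<psi> = e'" using h le by simp
    have "coalgebra_morphism sc d e' smult polydelta polyeps' \<psi>"
      unfolding coalgebra_morphism_def
      using h delta_compat[OF ci h[THEN conjunct1] ev1] ev1
      by (auto simp: coalgebra_morphism_def fun_eq_iff)
    then show "bialgebra_morphism sc m one D e smult (*) 1 polyDelta polyeps \<psi> \<and>
         bialgebra_morphism sc m one d e' smult (*) 1 polydelta polyeps' \<psi>"
      using b1 unfolding bialgebra_morphism_def by simp
  qed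
qed

end
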